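(* Let $n\geq2$. There exists at least one homogeneous harmonic polynomial $h$ of degree three on $\mathbb{R}^{n+1}$ which is $(n+2)$-symmetric and satisfies $\int_{B_1}h(y)\,dy=0$.
   Context: Fix $n+2$ points $q_1,\dots,q_{n+2}\in\mathbb{S}^n\subset\mathbb{R}^{n+1}$ spread evenly on $\mathbb{S}^n$ (vertices of an inscribed regular simplex). $\mathcal{S}_{n+2}(q)$ is the set of rotations $\phi\in SO(n+1)$ mapping $\{q_1,\dots,q_{n+2}\}$ onto itself; $h$ is $(n+2)$-symmetric if $h\circ\phi=h$ for all $\phi\in\mathcal{S}_{n+2}(q)$. $B_1$ is the unit ball of $\mathbb{R}^{n+1}$. *)

theory Defs
  imports "HOL-Analysis.Analysis"
begin

text \<open>Homogeneous polynomials of degree three on the Euclidean space indexed by the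
finite type 'n (i.e. R^(n+1) with n+1 = CARD('n)): explicit cubic forms.\<close>
definition homog_poly3 :: "(real^'n \<Rightarrow> real) \<Rightarrow> bool" where
  "homog_poly3 h \<longleftrightarrow> (\<exists>c :: 'n \<Rightarrow> 'n \<Rightarrow> 'n \<Rightarrow> real.
      \<forall>x. h x = (\<Sum>i\<in>UNIV. \<Sum>j\<in>UNIV. \<Sum>k\<in>UNIV. c i j k * x$i * x$j * x$k))"

definition laplacian :: "(real^'n \<Rightarrow> real) \<Rightarrow> real^'n \<Rightarrow> real" where
  "laplacian f x = (\<Sum>i\<in>UNIV.
      deriv (\<lambda>s. deriv (\<lambda>t. f (x + t *\<^sub>R axis i 1)) s) 0)"

definition harmonic :: "(real^'n \<Rightarrow> real) \<Rightarrow> bool" where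
  "harmonic f \<longleftrightarrow> (\<forall>x. laplacian f x = 0)"

definition sym_rotations :: "(nat \<Rightarrow> real^'n) \<Rightarrow> (real^'n^'n) set" where
  "sym_rotations q = {A. orthogonal_matrix A \<and> det A = 1 \<and>
      (\<lambda>x. A *v x) ` (q ` {..<CARD('n)+1}) = q ` {..<CARD('n)+1}}"

definition symmetric_wrt :: "(nat \<Rightarrow> real^'n) \<Rightarrow> (real^'n \<Rightarrow> real) \<Rightarrow> bool" where
  "symmetric_wrt q h \<longleftrightarrow> (\<forall>A\<in>sym_rotations q. \<forall>x. h (A *v x) = h x)"

end

theory Submission
  imports Defs
begin

lemma cube_sum:
  fixes a :: "'n::finite \<Rightarrow> real"
  shows "(\<Sum>i\<in>UNIV. a i)^3 = (\<Sum>i\<in>UNIV. \<Sum>j\<in>UNIV. \<Sum>k\<in>UNIV. a i * a j * a k)"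
proof -
  have "(\<Sum>i\<in>UNIV. a i)^3 = (\<Sum>i\<in>UNIV. a i) * ((\<Sum>j\<in>UNIV. a j) * (\<Sum>k\<in>UNIV. a k))"
    by (simp add: power3_eq_cube)
  also have "\<dots> = (\<Sum>i\<in>UNIV. \<Sum>j\<in>UNIV. \<Sum>k\<in>UNIV. a i * (a j * a k))"
  proof -
    have "(\<Sum>j\<in>UNIV. a j) * (\<Sum>k\<in>UNIV. a k) = (\<Sum>j\<in>UNIV. \<Sum>k\<in>UNIV. a j * a k)"
      by (rule sum_product)
    then show ?thesis unfolding sum_distrib_right by (simp only: sum_distrib_left)
  qed
  finally show ?thesis by (simp add: mult.assoc)
qed

lemma odd_integral_ball:
  fixes h :: "real^'n \<Rightarrow> real"
  assumes odd: "\<And>x. h (-x) = - h x"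
  shows "integral (ball 0 1) h = 0"
proof -
  define g where "g x = (if x \<in> ball 0 1 then h x else 0)" for x :: "real^'n"
  have sub: "ball (0::real^'n) 1 \<subseteq> cbox (-1) 1"
  proof
    fix x :: "real^'n" assume "x \<in> ball 0 1"
    then have "norm x < 1" by simp
    then have "\<bar>x$i\<bar> \<le> 1" for i using component_le_norm_cart[of x i] by linarith
    then show "x \<in> cbox (-1) 1" by (auto simp: mem_box_cart abs_le_iff)
  qed
  have godd: "g (-x) = - g x" for x unfolding g_def using odd by auto
  have "integral (cbox (-1) 1) g = integral (cbox (-1) (- (-1))) (\<lambda>x. g (-x))"
    using integral_reflect[where a="-1" and b="1::real^'n" and f=g] by simp
  also have "\<dots> = - integral (cbox (-1) 1) g" using godd by simp
  finally have c0: "integral (cbox (-1) 1) g = 0" by simp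
  have "integral (ball 0 1) h = integral UNIV g"
    unfolding g_def by (rule integral_restrict_UNIV[symmetric])
  also have "\<dots> = integral UNIV (\<lambda>x. if x \<in> cbox (-1) 1 then g x else 0)"
    using sub by (intro arg_cong[where f="integral UNIV"]) (auto simp: g_def fun_eq_iff)
  also have "\<dots> = integral (cbox (-1) 1) g" by (rule integral_restrict_UNIV)
  finally show ?thesis using c0 by simp
qed


lemma deriv_cube_sum:
  fixes a b :: "nat \<Rightarrow> real"
  shows "deriv (\<lambda>s. deriv (\<lambda>t. \<Sum>k\<in>I. (a k + t * b k)^3) s) 0 = (\<Sum>k\<in>I. 6 * a k * (b k)^2)"
proof -
  have d1: "((\<lambda>t. \<Sum>k\<in>I. (a k + t * b k)^3) has_real_derivative (\<Sum>k\<in>I. 3 * (a k + s * b k)^2 * b k)) (at s)" for s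
    by (auto intro!: derivative_eq_intros simp: algebra_simps)
  have e1: "deriv (\<lambda>t. \<Sum>k\<in>I. (a k + t * b k)^3) = (\<lambda>s. \<Sum>k\<in>I. 3 * (a k + s * b k)^2 * b k)"
    using d1 DERIV_imp_deriv by (intro ext) blast
  have d2: "((\<lambda>s. \<Sum>k\<in>I. 3 * (a k + s * b k)^2 * b k) has_real_derivative (\<Sum>k\<in>I. 6 * a k * (b k)^2)) (at 0)"
    by (auto intro!: derivative_eq_intros sum.cong simp: algebra_simps power2_eq_square)
  show ?thesis unfolding e1 using DERIV_imp_deriv[OF d2] .
qed

theorem lemma8p1:
  fixes q :: "nat \<Rightarrow> real^'n"
  assumes "CARD('n) \<ge> 3"
    and "\<forall>i<CARD('n)+1. norm (q i) = 1"
    and "\<forall>i<CARD('n)+1. \<forall>j<CARD('n)+1. i \<noteq> j \<longrightarrow> q i \<bullet> q j = - 1 / real CARD('n)"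
  shows "\<exists>h :: real^'n \<Rightarrow> real. homog_poly3 h \<and> harmonic h \<and> h \<noteq> (\<lambda>x. 0)
           \<and> symmetric_wrt q h \<and> integral (ball 0 1) h = 0"
proof -
  define N where "N = CARD('n)"
  define I where "I = {..<N+1}"
  have N3: "N \<ge> 3" using assms(1) N_def by simp
  have fin: "finite I" unfolding I_def by simp
  have nrm: "q i \<bullet> q i = 1" if "i \<in> I" for i
    using assms(2) that unfolding I_def N_def by (simp add: dot_square_norm)
  have off: "q i \<bullet> q j = - 1 / real N" if "i \<in> I" "j \<in> I" "i \<noteq> j" for i j
    using assms(3) that unfolding I_def N_def by simp
  have inj: "inj_on q I"
  proof (rule inj_onI)
    fix i j assume ij: "i \<in> I" "j \<in> I" "q i = q j"
    show "i = j"
    proof (rule ccontr)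
      assume "i \<noteq> j"
      then have "q i \<bullet> q j = - 1 / real N" by (rule off[OF ij(1) ij(2)])
      moreover have "q i \<bullet> q j = 1" using nrm ij by simp
      moreover have "- 1 / real N < 0" using N3 by simp
      ultimately show False by simp
    qed
  qed
  have cardI: "card I = N + 1" unfolding I_def by simp
  have rowsum: "(\<Sum>j\<in>I. q i \<bullet> q j) = 0" if "i \<in> I" for i
  proof -
    have "(\<Sum>j\<in>I. q i \<bullet> q j) = q i \<bullet> q i + (\<Sum>j\<in>I - {i}. q i \<bullet> q j)"
      using fin that by (simp add: sum.remove)
    also have "(\<Sum>j\<in>I - {i}. q i \<bullet> q j) = (\<Sum>j\<in>I - {i}. - 1 / real N)"
      using off that by (intro sum.cong) auto
    also have "\<dots> = real N * (- 1 / real N)" using fin that cardI by simp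
    also have "\<dots> = -1" using N3 by simp
    finally show ?thesis using nrm that by simp
  qed
  have S0: "(\<Sum>i\<in>I. q i) = 0"
  proof -
    have "(\<Sum>i\<in>I. q i) \<bullet> (\<Sum>i\<in>I. q i) = (\<Sum>i\<in>I. \<Sum>j\<in>I. q i \<bullet> q j)"
      unfolding inner_sum_left by (simp only: inner_sum_right)
    also have "\<dots> = 0" using rowsum by simp
    finally show ?thesis by simp
  qed
  define h where "h x = (\<Sum>i\<in>I. (q i \<bullet> x)^3)" for x :: "real^'n"
  have homog: "homog_poly3 h"
  proof -
    define c where "c i j k = (\<Sum>m\<in>I. q m $ i * q m $ j * q m $ k)" for i j k
    have "h x = (\<Sum>i\<in>UNIV. \<Sum>j\<in>UNIV. \<Sum>k\<in>UNIV. c i j k * x$i * x$j * x$k)" for x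
    proof -
      have e: "(q m \<bullet> x)^3 = (\<Sum>i\<in>UNIV. \<Sum>j\<in>UNIV. \<Sum>k\<in>UNIV.
           (q m $ i * x $ i) * (q m $ j * x $ j) * (q m $ k * x $ k))" for m
        unfolding inner_vec_def inner_real_def by (rule cube_sum)
      have "h x = (\<Sum>m\<in>I. \<Sum>i\<in>UNIV. \<Sum>j\<in>UNIV. \<Sum>k\<in>UNIV.
           (q m $ i * x $ i) * (q m $ j * x $ j) * (q m $ k * x $ k))"
        unfolding h_def e ..
      also have "\<dots> = (\<Sum>i\<in>UNIV. \<Sum>m\<in>I. \<Sum>j\<in>UNIV. \<Sum>k\<in>UNIV.
           (q m $ i * x $ i) * (q m $ j * x $ j) * (q m $ k * x $ k))"
        by (rule sum.swap)
      also have "\<dots> = (\<Sum>i\<in>UNIV. \<Sum>j\<in>UNIV. \<Sum>m\<in>I. \<Sum>k\<in>UNIV.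
           (q m $ i * x $ i) * (q m $ j * x $ j) * (q m $ k * x $ k))"
        by (intro sum.cong refl sum.swap)
      also have "\<dots> = (\<Sum>i\<in>UNIV. \<Sum>j\<in>UNIV. \<Sum>k\<in>UNIV. \<Sum>m\<in>I.
           (q m $ i * x $ i) * (q m $ j * x $ j) * (q m $ k * x $ k))"
        by (intro sum.cong refl sum.swap)
      also have "\<dots> = (\<Sum>i\<in>UNIV. \<Sum>j\<in>UNIV. \<Sum>k\<in>UNIV. c i j k * x$i * x$j * x$k)"
        unfolding c_def sum_distrib_right by (intro sum.cong refl) (simp add: ac_simps)
      finally show ?thesis .
    qed
    then show ?thesis unfolding homog_poly3_def by blast
  qed
  have harm: "harmonic h"
    unfolding harmonic_def
  proof
    fix x :: "real^'n"
    have f: "(\<lambda>t. h (x + t *\<^sub>R axis i 1)) = (\<lambda>t. \<Sum>k\<in>I. (q k \<bullet> x + t * q k $ i)^3)" for i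
      by (simp add: h_def inner_add_right inner_axis)
    have sq: "(\<Sum>i\<in>UNIV. (q k $ i)^2) = 1" if "k \<in> I" for k
      using nrm[OF that] unfolding inner_vec_def inner_real_def by (simp add: power2_eq_square)
    have "laplacian h x = (\<Sum>i\<in>UNIV. \<Sum>k\<in>I. 6 * (q k \<bullet> x) * (q k $ i)^2)"
      unfolding laplacian_def f deriv_cube_sum ..
    also have "\<dots> = (\<Sum>k\<in>I. \<Sum>i\<in>UNIV. 6 * (q k \<bullet> x) * (q k $ i)^2)"
      by (rule sum.swap)
    also have "\<dots> = (\<Sum>k\<in>I. 6 * (q k \<bullet> x) * (\<Sum>i\<in>UNIV. (q k $ i)^2))"
      by (simp add: sum_distrib_left)
    also have "\<dots> = (\<Sum>k\<in>I. 6 * (q k \<bullet> x))"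
      using sq by (intro sum.cong) auto
    also have "\<dots> = 6 * ((\<Sum>k\<in>I. q k) \<bullet> x)"
      by (simp add: sum_distrib_left inner_sum_left)
    also have "\<dots> = 0" using S0 by simp
    finally show "laplacian h x = 0" .
  qed
  have nz: "h \<noteq> (\<lambda>x. 0)"
  proof
    assume h0: "h = (\<lambda>x. 0)"
    have z: "0 \<in> I" unfolding I_def by simp
    have "h (q 0) = (q 0 \<bullet> q 0)^3 + (\<Sum>i\<in>I - {0}. (q i \<bullet> q 0)^3)"
      unfolding h_def using fin z by (simp add: sum.remove)
    also have "(\<Sum>i\<in>I - {0}. (q i \<bullet> q 0)^3) = (\<Sum>i\<in>I - {0}. (- 1 / real N)^3)"
      using off z by (intro sum.cong) auto
    also have "\<dots> = real N * (- 1 / real N)^3" using fin z cardI by simp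
    also have "\<dots> = - 1 / (real N)^2" using N3 by (simp add: power3_eq_cube power2_eq_square)
    finally have "h (q 0) = 1 - 1 / (real N)^2" using nrm[OF z] by simp
    moreover have "1 / (real N)^2 < 1"
    proof -
      have r: "3 \<le> real N" using N3 by simp
      have "9 \<le> real N * real N" using mult_mono[OF r r] by simp
      then show ?thesis by (simp add: power2_eq_square)
    qed
    ultimately have "h (q 0) \<noteq> 0" by linarith
    then show False using h0 by simp
  qed
  have sym: "symmetric_wrt q h"
    unfolding symmetric_wrt_def
  proof (intro ballI allI)
    fix A :: "real^'n^'n" and x :: "real^'n"
    assume "A \<in> sym_rotations q"
    then have orth: "orthogonal_matrix A" and AQ: "(\<lambda>x. A *v x) ` (q ` I) = q ` I"
      unfolding sym_rotations_def I_def N_def by auto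
    define T where "T y = transpose A *v y" for y :: "real^'n"
    have TA: "T (A *v y) = y" for y
      using orth unfolding T_def orthogonal_matrix_def by (simp add: matrix_vector_mul_assoc)
    have AT: "A *v T y = y" for y
      using orth unfolding T_def orthogonal_matrix_def
      by (simp add: matrix_vector_mul_assoc del: transpose_matrix_vector)
    have injT: "inj_on T (q ` I)" by (metis AT inj_onI)
    have TQ: "T ` (q ` I) = q ` I"
    proof -
      have "T ` (q ` I) = T ` ((\<lambda>x. A *v x) ` (q ` I))" using AQ by simp
      also have "\<dots> = q ` I" by (simp add: image_image TA)
      finally show ?thesis .
    qed
    have dot: "p \<bullet> (A *v x) = T p \<bullet> x" for p
      unfolding T_def by (simp add: dot_lmul_matrix[symmetric])
    define g where "g p = (p \<bullet> x)^3" for p :: "real^'n"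
    have hs: "h y = (\<Sum>p\<in>q ` I. (p \<bullet> y)^3)" for y
      unfolding h_def using inj by (simp add: sum.reindex)
    have "h (A *v x) = (\<Sum>p\<in>q ` I. g (T p))" unfolding hs g_def dot ..
    also have "\<dots> = (\<Sum>p\<in>T ` (q ` I). g p)" using injT by (simp add: sum.reindex)
    also have "\<dots> = h x" unfolding TQ hs g_def ..
    finally show "h (A *v x) = h x" .
  qed
  have int: "integral (ball 0 1) h = 0"
    by (rule odd_integral_ball) (simp add: h_def sum_negf)
  show ?thesis using homog harm nz sym int by blast
qed

end
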